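(* Fix a metric space $M$ and a point $s\in M$, and consider algorithms with all servers starting at $s$. Suppose there is a constant $\rho$ such that for every $h\in\mathbb{N}$ there exists $k=k(h)$ for which the $(h,k)$-server problem on $M$ (all online and offline servers starting at $s$) admits a strictly $\rho$-competitive online algorithm. Then there exists a strictly $\rho$-competitive online algorithm for the infinite server problem on $(M,s)$.
   Context: Infinite server problem on $(M,s)$: $M$ is a metric space with metric $d$ and $s\in M$ is the source. An unbounded number of servers initially reside at $s$. A finite sequence of requests (points of $M$) is revealed one by one; each must be served immediately, without knowledge of future requests, by moving some server to the requested point. The cost is the total distance traveled by the servers. The $(h,k)$-server problem on $M$ ($k\ge h$) is defined similarly except that the online algorithm has $k$ servers and is compared against an optimal offline algorithm with $h$ servers. All online algorithms are deterministic. An online algorithm $ALG$ is strictly $\rho$-competitive if $ALG(\sigma)\le \rho\, OPT(\sigma)$ for every request sequence $\sigma$, where $OPT(\sigma)$ is the optimal offline cost (with $h$ servers in the $(h,k)$ case, with unboundedly many servers in the infinite server case). *)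

theory Defs
  imports Main "HOL-Analysis.Analysis"
begin

text \<open>A schedule c assigns to step i (0-based) the index c i of the server
that is moved to the i-th request.\<close>

fun run_cost :: "(nat \<Rightarrow> 'a::metric_space) \<Rightarrow> (nat \<Rightarrow> nat) \<Rightarrow> 'a list \<Rightarrow> real" where
  "run_cost conf c [] = 0"
| "run_cost conf c (r # rs) =
     dist (conf (c 0)) r + run_cost (conf(c 0 := r)) (\<lambda>i. c (Suc i)) rs"

definition sched_cost :: "'a::metric_space \<Rightarrow> (nat \<Rightarrow> nat) \<Rightarrow> 'a list \<Rightarrow> real" where
  "sched_cost s c \<sigma> = run_cost (\<lambda>_. s) c \<sigma>"

text \<open>A deterministic online algorithm is a map from the requests seen so far (the last
element being the current request) to the index of the server it moves.\<close>
definition online_cost :: "'a::metric_space \<Rightarrow> ('a list \<Rightarrow> nat) \<Rightarrow> 'a list \<Rightarrow> real" where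
  "online_cost s A \<sigma> = sched_cost s (\<lambda>i. A (take (Suc i) \<sigma>)) \<sigma>"

definition opt_h :: "'a::metric_space \<Rightarrow> nat \<Rightarrow> 'a list \<Rightarrow> real" where
  "opt_h s h \<sigma> = Inf {sched_cost s c \<sigma> | c. \<forall>i. c i < h}"

definition opt_inf :: "'a::metric_space \<Rightarrow> 'a list \<Rightarrow> real" where
  "opt_inf s \<sigma> = Inf {sched_cost s c \<sigma> | c. True}"

end

theory Submission imports Defs "HOL-Analysis.Analysis" begin

lemma run_cost_local:
  "(\<forall>i<length rs. c i = c' i) \<Longrightarrow> run_cost conf c rs = run_cost conf c' rs"
proof (induction rs arbitrary: conf c c')
  case Nil then show ?case by simp
next
  case (Cons r rs)
  have "c 0 = c' 0" using Cons.prems by auto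
  moreover have "\<forall>i<length rs. c (Suc i) = c' (Suc i)" using Cons.prems by auto
  ultimately show ?case using Cons.IH[of "\<lambda>i. c (Suc i)" "\<lambda>i. c' (Suc i)"] by simp
qed

lemma run_cost_relabel:
  assumes "\<forall>i. c i \<in> V" "inj_on f V" "\<forall>v\<in>V. conf' (f v) = conf v"
  shows "run_cost conf c rs = run_cost conf' (f \<circ> c) rs"
  using assms
proof (induction rs arbitrary: conf conf' c)
  case Nil then show ?case by simp
next
  case (Cons r rs)
  have h: "\<forall>v\<in>V. (conf'(f (c 0) := r)) (f v) = (conf(c 0 := r)) v"
    using Cons.prems by (auto dest: inj_onD)
  have "run_cost (conf(c 0 := r)) (\<lambda>i. c (Suc i)) rs
        = run_cost (conf'(f (c 0) := r)) (f \<circ> (\<lambda>i. c (Suc i))) rs"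
    by (rule Cons.IH) (use Cons.prems h in auto)
  then show ?case using Cons.prems by (simp add: o_def)
qed

definition nc :: "(nat \<Rightarrow> nat) \<Rightarrow> nat \<Rightarrow> nat" where
  "nc c i = card (c ` {..<(LEAST j. c j = c i)})"

lemma least_le: "(LEAST j. c j = c i) \<le> (i::nat)"
  by (rule Least_le) simp

lemma nc_le: "nc c i \<le> i"
proof -
  have "nc c i \<le> card {..<(LEAST j. c j = c i)}" unfolding nc_def by (rule card_image_le) simp
  also have "\<dots> \<le> i" using least_le[of c i] by simp
  finally show ?thesis .
qed

lemma nc_local:
  assumes "\<forall>j\<le>i. c j = c' j"
  shows "nc c i = nc c' i"
proof -
  have L: "(LEAST j. c' j = c' i) = (LEAST j. c j = c i)"
  proof (rule Least_equality)
    show "c' (LEAST j. c j = c i) = c' i"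
      using assms least_le[of c i] LeastI[of "\<lambda>j. c j = c i" i] by auto
    show "\<And>y. c' y = c' i \<Longrightarrow> (LEAST j. c j = c i) \<le> y"
    proof -
      fix y assume y: "c' y = c' i"
      show "(LEAST j. c j = c i) \<le> y"
      proof (cases "y \<le> i")
        case True then show ?thesis using assms y by (intro Least_le) auto
      next
        case False then show ?thesis using least_le[of c i] by simp
      qed
    qed
  qed
  have "c ` {..<(LEAST j. c j = c i)} = c' ` {..<(LEAST j. c j = c i)}"
    using assms least_le[of c i] by (intro image_cong) auto
  then show ?thesis unfolding nc_def L by simp
qed

definition gv :: "(nat \<Rightarrow> nat) \<Rightarrow> nat \<Rightarrow> nat" where
  "gv c v = card (c ` {..<(LEAST j. c j = v)})"

lemma nc_gv: "nc c i = gv c (c i)" by (simp add: nc_def gv_def)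

lemma gv_inj: "inj_on (gv c) (range c)"
proof (rule inj_onI)
  fix x y assume "x \<in> range c" "y \<in> range c" and eq: "gv c x = gv c y"
  show "x = y"
  proof (rule ccontr)
    assume ne: "x \<noteq> y"
    define a where "a = (LEAST j. c j = x)"
    define b where "b = (LEAST j. c j = y)"
    have ca: "c a = x" using \<open>x \<in> range c\<close> unfolding a_def by (auto intro: LeastI)
    have cb: "c b = y" using \<open>y \<in> range c\<close> unfolding b_def by (auto intro: LeastI)
    have nina: "x \<notin> c ` {..<a}" unfolding a_def by (auto dest: not_less_Least)
    have ninb: "y \<notin> c ` {..<b}" unfolding b_def by (auto dest: not_less_Least)
    have "a \<noteq> b" using ca cb ne by auto
    then consider "a < b" | "b < a" by linarith
    then show False
    proof cases
      case 1
      have "insert x (c ` {..<a}) \<subseteq> c ` {..<b}" using 1 ca by auto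
      then have "card (insert x (c ` {..<a})) \<le> card (c ` {..<b})" by (intro card_mono) auto
      then have "card (c ` {..<a}) < card (c ` {..<b})" using nina by simp
      then show False using eq unfolding gv_def a_def b_def by simp
    next
      case 2
      have "insert y (c ` {..<b}) \<subseteq> c ` {..<a}" using 2 cb by auto
      then have "card (insert y (c ` {..<b})) \<le> card (c ` {..<a})" by (intro card_mono) auto
      then have "card (c ` {..<b}) < card (c ` {..<a})" using ninb by simp
      then show False using eq unfolding gv_def a_def b_def by simp
    qed
  qed
qed

lemma sched_cost_nc: "sched_cost s (nc c) \<sigma> = sched_cost s c \<sigma>"
proof -
  have "nc c = gv c \<circ> c" by (simp add: fun_eq_iff nc_gv)
  then show ?thesis unfolding sched_cost_def
    using run_cost_relabel[of c "range c" "gv c" "\<lambda>_. s" "\<lambda>_. s" \<sigma>] gv_inj by simp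
qed

definition normA :: "('a list \<Rightarrow> nat) \<Rightarrow> 'a list \<Rightarrow> nat" where
  "normA A xs = nc (\<lambda>j. A (take (Suc j) xs)) (length xs - 1)"

lemma normA_take:
  assumes "i < length \<sigma>"
  shows "normA A (take (Suc i) \<sigma>) = nc (\<lambda>j. A (take (Suc j) \<sigma>)) i"
proof -
  have "length (take (Suc i) \<sigma>) - 1 = i" using assms by simp
  moreover have "nc (\<lambda>j. A (take (Suc j) (take (Suc i) \<sigma>))) i = nc (\<lambda>j. A (take (Suc j) \<sigma>)) i"
    by (rule nc_local) (simp add: min_def)
  ultimately show ?thesis unfolding normA_def by simp
qed

lemma normA_le: "normA A xs \<le> length xs"
  unfolding normA_def using nc_le[of _ "length xs - 1"] by (meson diff_le_self le_trans)

lemma online_cost_normA: "online_cost s (normA A) \<sigma> = online_cost s A \<sigma>"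
proof -
  have "sched_cost s (\<lambda>i. normA A (take (Suc i) \<sigma>)) \<sigma>
      = sched_cost s (nc (\<lambda>j. A (take (Suc j) \<sigma>))) \<sigma>"
    unfolding sched_cost_def by (rule run_cost_local) (simp add: normA_take)
  then show ?thesis unfolding online_cost_def sched_cost_nc by simp
qed

lemma opt_h_eq:
  assumes "n \<ge> 1" "length \<sigma> \<le> n"
  shows "opt_h s n \<sigma> = opt_inf s \<sigma>"
proof -
  have "{sched_cost s c \<sigma> | c. \<forall>i. c i < n} = {sched_cost s c \<sigma> | c. True}"
  proof (intro set_eqI iffI)
    fix x assume "x \<in> {sched_cost s c \<sigma> | c. True}"
    then obtain c where x: "x = sched_cost s c \<sigma>" by auto
    define c' where "c' i = (if i < length \<sigma> then nc c i else 0)" for i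
    have "c' i < n" for i
    proof (cases "i < length \<sigma>")
      case True
      have "nc c i \<le> i" by (rule nc_le)
      then show ?thesis using True assms(2) unfolding c'_def by simp
    next
      case False then show ?thesis using assms(1) unfolding c'_def by simp
    qed
    moreover have "sched_cost s c' \<sigma> = sched_cost s (nc c) \<sigma>"
      unfolding sched_cost_def by (rule run_cost_local) (simp add: c'_def)
    ultimately show "x \<in> {sched_cost s c \<sigma> | c. \<forall>i. c i < n}"
      using x sched_cost_nc[of s c \<sigma>] by (auto intro!: exI[of _ c'])
  qed auto
  then show ?thesis unfolding opt_h_def opt_inf_def by simp
qed

theorem theorem2:
  fixes s :: "'a::metric_space" and \<rho> :: real
  assumes "\<forall>h::nat. h \<ge> 1 \<longrightarrow> (\<exists>k::nat. k \<ge> h \<and>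
             (\<exists>A :: 'a list \<Rightarrow> nat. (\<forall>xs. A xs < k) \<and>
                (\<forall>\<sigma>. online_cost s A \<sigma> \<le> \<rho> * opt_h s h \<sigma>)))"
  shows "\<exists>A :: 'a list \<Rightarrow> nat. \<forall>\<sigma>. online_cost s A \<sigma> \<le> \<rho> * opt_inf s \<sigma>"
proof (rule ccontr)
  assume neg: "\<not> ?thesis"
  define T where "T = product_topology (\<lambda>xs::'a list. discrete_topology {..length xs}) UNIV"
  have cT: "compact_space T"
    by (simp add: T_def compact_space_product_topology compact_space_discrete_topology)
  have top: "topspace T = {A. \<forall>xs. A xs \<le> length xs}"
    by (auto simp: T_def PiE_def)
  define U where "U \<sigma> = {A \<in> topspace T. \<rho> * opt_inf s \<sigma> < online_cost s A \<sigma>}" for \<sigma>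
  have openU: "openin T (U \<sigma>)" for \<sigma>
  proof (subst openin_subopen, intro ballI)
    fix A assume AU: "A \<in> U \<sigma>"
    then have At: "A \<in> topspace T" unfolding U_def by simp
    define C where "C = (\<Inter>i\<in>{..<length \<sigma>}. {B \<in> topspace T. B (take (Suc i) \<sigma>) \<in> {A (take (Suc i) \<sigma>)}}) \<inter> topspace T"
    have "openin T C" unfolding C_def
    proof (rule openin_INT)
      fix i
      have cm: "continuous_map T (discrete_topology {..length (take (Suc i) \<sigma>)}) (\<lambda>B. B (take (Suc i) \<sigma>))"
        unfolding T_def by (rule continuous_map_product_projection) simp
      have "openin (discrete_topology {..length (take (Suc i) \<sigma>)}) {A (take (Suc i) \<sigma>)}"
        using At top by (auto simp del: length_take)
      then show "openin T {B \<in> topspace T. B (take (Suc i) \<sigma>) \<in> {A (take (Suc i) \<sigma>)}}"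
        by (rule openin_continuous_map_preimage[OF cm])
    qed simp
    moreover have "A \<in> C" using At unfolding C_def by auto
    moreover have "C \<subseteq> U \<sigma>"
    proof
      fix B assume "B \<in> C"
      then have Bt: "B \<in> topspace T" and eq: "\<forall>i<length \<sigma>. B (take (Suc i) \<sigma>) = A (take (Suc i) \<sigma>)"
        unfolding C_def by auto
      have "online_cost s B \<sigma> = online_cost s A \<sigma>"
        unfolding online_cost_def sched_cost_def by (rule run_cost_local) (use eq in simp)
      then show "B \<in> U \<sigma>" using AU Bt unfolding U_def by simp
    qed
    ultimately show "\<exists>T'. openin T T' \<and> A \<in> T' \<and> T' \<subseteq> U \<sigma>" by blast
  qed
  have cover: "topspace T \<subseteq> \<Union>(range U)"
  proof
    fix A assume "A \<in> topspace T"
    moreover obtain \<sigma> where "\<rho> * opt_inf s \<sigma> < online_cost s A \<sigma>" using neg by (auto simp: not_le)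
    ultimately show "A \<in> \<Union>(range U)" unfolding U_def by blast
  qed
  obtain F where F: "finite F" "F \<subseteq> range U" "topspace T \<subseteq> \<Union>F"
    using cT cover openU unfolding compact_space_alt by (metis rangeE)
  obtain S where S: "finite S" "F = U ` S" using finite_subset_image[OF F(1) F(2)] by blast
  define n where "n = Suc (\<Sum>\<sigma>\<in>S. length \<sigma>)"
  have lenS: "length \<sigma> \<le> n" if "\<sigma> \<in> S" for \<sigma>
    using member_le_sum[of \<sigma> S length] that S(1) unfolding n_def by simp
  have "n \<ge> 1" unfolding n_def by simp
  then obtain A where A: "\<forall>\<sigma>. online_cost s A \<sigma> \<le> \<rho> * opt_h s n \<sigma>"
    using assms by blast
  have "normA A \<in> topspace T" using top normA_le by auto
  then obtain \<sigma> where "\<sigma> \<in> S" "normA A \<in> U \<sigma>" using F(3) S(2) by auto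
  then have "\<rho> * opt_inf s \<sigma> < online_cost s A \<sigma>" unfolding U_def by (simp add: online_cost_normA)
  moreover have "opt_h s n \<sigma> = opt_inf s \<sigma>" using opt_h_eq \<open>n \<ge> 1\<close> lenS \<open>\<sigma> \<in> S\<close> by blast
  ultimately show False using A by (metis not_le)
qed

end
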